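(* Let $n>1$, $q\geqslant 0$ and $m_0,\dots,m_{q-1}>1$ be natural numbers, and let $t,s_0,\dots,s_{q-1},u,v$ be variables distinct from $x$. Then the theory ${\sf TQ}$ proves that each of the formulas $\exists x\,[\Re_n(x\cdot t)\wedge \bigwedge_{j<q}\neg\Re_{m_j}(x\cdot s_j)]$, $\exists x\,[u<x\wedge \Re_n(x\cdot t)\wedge \bigwedge_{j<q}\neg\Re_{m_j}(x\cdot s_j)]$, $\exists x\,[x<v\wedge \Re_n(x\cdot t)\wedge \bigwedge_{j<q}\neg\Re_{m_j}(x\cdot s_j)]$ is equivalent to $\bigwedge_{j<q,\ m_j\mid n}\neg\Re_{m_j}(t^{-1}\cdot s_j)$, and that the formula $\exists x\,[u<x\wedge x<v\wedge \Re_n(x\cdot t)\wedge \bigwedge_{j<q}\neg\Re_{m_j}(x\cdot s_j)]$ is equivalent to $\bigwedge_{j<q,\ m_j\mid n}\neg\Re_{m_j}(t^{-1}\cdot s_j)\wedge u<v$. (Here $\bigwedge_{j<q,\,m_j\mid n}$ ranges over those $j<q$ with $m_j$ dividing $n$; an empty conjunction is the true formula.)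
   Context: Language $\{<,\times,\square^{-1},\mathbf{1}\}$; $y^n$ abbreviates $y\cdots y$ ($n$ times); for $n\geqslant 1$, $\Re_n(y)$ abbreviates the formula $\exists x\,(y=x^n)$. ${\sf TQ}$ is the theory axiomatized by: ($\texttt{O}_1$) $\forall x,y(x<y\rightarrow\neg(y<x))$; ($\texttt{O}_2$) $\forall x,y,z(x<y\wedge y<z\rightarrow x<z)$; ($\texttt{O}_3$) $\forall x,y(x<y\vee x=y\vee y<x)$; ($\texttt{M}_1$) $\forall x,y,z(x\cdot(y\cdot z)=(x\cdot y)\cdot z)$; ($\texttt{M}_2$) $\forall x(x\cdot\mathbf{1}=x)$; ($\texttt{M}_3$) $\forall x(x\cdot x^{-1}=\mathbf{1})$; ($\texttt{M}_4$) $\forall x,y(x\cdot y=y\cdot x)$; ($\texttt{M}_5$) $\forall x,y,z(x<y\rightarrow x\cdot z<y\cdot z)$; ($\texttt{M}_6$) $\exists y(y\neq\mathbf{1})$; ($\texttt{M}_{10}$) for each $n\geqslant1$: $\forall x,z\exists y(x<z\rightarrow x<y^n\wedge y^n<z)$; ($\texttt{M}_{11}$) for each $n\geqslant 1$, each $q\geqslant1$ and all natural numbers $m_0,\dots,m_{q-1}>1$: $\forall x_0,\dots,x_{q-1}\exists y\forall z\bigwedge_{j<q,\ m_j\nmid n}(y^n\cdot x_j\neq z^{m_j})$, the conjunction ranging over those $j<q$ for which $m_j$ does not divide $n$. *)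

theory Defs
  imports Main
begin

text \<open>y^n = y * ... * y (n times), meaningful for n >= 1; the value at n = 0 is junk
  and never used.\<close>
fun mpow :: "('a \<Rightarrow> 'a \<Rightarrow> 'a) \<Rightarrow> 'a \<Rightarrow> nat \<Rightarrow> 'a" where
  "mpow mul y 0 = y"
| "mpow mul y (Suc 0) = y"
| "mpow mul y (Suc (Suc k)) = mul (mpow mul y (Suc k)) y"

definition Re :: "('a \<Rightarrow> 'a \<Rightarrow> 'a) \<Rightarrow> nat \<Rightarrow> 'a \<Rightarrow> bool" where
  "Re mul n y \<longleftrightarrow> (\<exists>x. y = mpow mul x n)"

definition TQ_model :: "('a \<Rightarrow> 'a \<Rightarrow> bool) \<Rightarrow> ('a \<Rightarrow> 'a \<Rightarrow> 'a) \<Rightarrow> ('a \<Rightarrow> 'a) \<Rightarrow> 'a \<Rightarrow> bool" where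
  "TQ_model lt mul iv e \<longleftrightarrow>
     (\<forall>x y. lt x y \<longrightarrow> \<not> lt y x) \<and>
     (\<forall>x y z. lt x y \<and> lt y z \<longrightarrow> lt x z) \<and>
     (\<forall>x y. lt x y \<or> x = y \<or> lt y x) \<and>
     (\<forall>x y z. mul x (mul y z) = mul (mul x y) z) \<and>
     (\<forall>x. mul x e = x) \<and>
     (\<forall>x. mul x (iv x) = e) \<and>
     (\<forall>x y. mul x y = mul y x) \<and>
     (\<forall>x y z. lt x y \<longrightarrow> lt (mul x z) (mul y z)) \<and>
     (\<exists>y. y \<noteq> e) \<and>
     (\<forall>n::nat. n \<ge> 1 \<longrightarrow> (\<forall>x z. \<exists>y. lt x z \<longrightarrow> lt x (mpow mul y n) \<and> lt (mpow mul y n) z)) \<and>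
     (\<forall>n::nat. \<forall>q::nat. \<forall>m::nat \<Rightarrow> nat. n \<ge> 1 \<longrightarrow> q \<ge> 1 \<longrightarrow> (\<forall>j<q. m j > 1) \<longrightarrow>
        (\<forall>xs::nat \<Rightarrow> 'a. \<exists>y. \<forall>z. \<forall>j<q. \<not> m j dvd n \<longrightarrow> mul (mpow mul y n) (xs j) \<noteq> mpow mul z (m j)))"

end

theory Submission imports Defs "HOL-Algebra.Group" begin

locale tq =
  fixes lt :: "'a \<Rightarrow> 'a \<Rightarrow> bool" and mul :: "'a \<Rightarrow> 'a \<Rightarrow> 'a" and iv :: "'a \<Rightarrow> 'a" and e :: 'a
  assumes tq: "TQ_model lt mul iv e"
begin

lemmas ax0 = tq[unfolded TQ_model_def]
lemmas ax1 = ax0[THEN conjunct1]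
lemmas ax2 = ax0[THEN conjunct2, THEN conjunct1]
lemmas ax3 = ax0[THEN conjunct2, THEN conjunct2, THEN conjunct1]
lemmas ax4 = ax0[THEN conjunct2, THEN conjunct2, THEN conjunct2, THEN conjunct1]
lemmas ax5 = ax0[THEN conjunct2, THEN conjunct2, THEN conjunct2, THEN conjunct2, THEN conjunct1]
lemmas ax6 = ax0[THEN conjunct2, THEN conjunct2, THEN conjunct2, THEN conjunct2, THEN conjunct2, THEN conjunct1]
lemmas ax7 = ax0[THEN conjunct2, THEN conjunct2, THEN conjunct2, THEN conjunct2, THEN conjunct2, THEN conjunct2, THEN conjunct1]
lemmas ax8 = ax0[THEN conjunct2, THEN conjunct2, THEN conjunct2, THEN conjunct2, THEN conjunct2, THEN conjunct2, THEN conjunct2, THEN conjunct1]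
lemmas ax9 = ax0[THEN conjunct2, THEN conjunct2, THEN conjunct2, THEN conjunct2, THEN conjunct2, THEN conjunct2, THEN conjunct2, THEN conjunct2, THEN conjunct1]
lemmas ax10 = ax0[THEN conjunct2, THEN conjunct2, THEN conjunct2, THEN conjunct2, THEN conjunct2, THEN conjunct2, THEN conjunct2, THEN conjunct2, THEN conjunct2, THEN conjunct1]
lemmas ax11 = ax0[THEN conjunct2, THEN conjunct2, THEN conjunct2, THEN conjunct2, THEN conjunct2, THEN conjunct2, THEN conjunct2, THEN conjunct2, THEN conjunct2, THEN conjunct2]
lemmas ax = ax1 ax2 ax3 ax4 ax5 ax6 ax7 ax8 ax9 ax10 ax11

lemma asym: "lt x y \<Longrightarrow> \<not> lt y x" using ax(1) by blast
lemma trans: "lt x y \<Longrightarrow> lt y z \<Longrightarrow> lt x z" using ax(2) by blast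
lemma total: "lt x y \<or> x = y \<or> lt y x" using ax(3) by blast
lemma assoc: "mul (mul x y) z = mul x (mul y z)" using ax(4) by simp
lemma r_one: "mul x e = x" using ax(5) by blast
lemma r_inv: "mul x (iv x) = e" using ax(6) by blast
lemma comm: "mul x y = mul y x" using ax(7) by blast
lemma mono: "lt x y \<Longrightarrow> lt (mul x z) (mul y z)" using ax(8) by blast
lemma nontriv: "\<exists>y. y \<noteq> e" using ax(9) by blast
lemma M10: "n \<ge> 1 \<Longrightarrow> lt x z \<Longrightarrow> \<exists>y. lt x (mpow mul y n) \<and> lt (mpow mul y n) z"
  using ax(10) by blast
lemma M11: "n \<ge> 1 \<Longrightarrow> (q::nat) \<ge> 1 \<Longrightarrow> (\<forall>j<q. m j > 1) \<Longrightarrow>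
   \<exists>y. \<forall>z. \<forall>j<q. \<not> m j dvd n \<longrightarrow> mul (mpow mul y n) (xs j) \<noteq> mpow mul z (m j)"
  using ax11[rule_format, of n q m xs] by blast

lemma l_one: "mul e x = x" using comm r_one by metis
lemma l_inv: "mul (iv x) x = e" using comm r_inv by metis
lemma lcomm: "mul x (mul y z) = mul y (mul x z)" using assoc comm by metis

abbreviation G where "G \<equiv> \<lparr>carrier = UNIV, mult = mul, one = e\<rparr>"

lemma grp: "comm_group G"
  proof (rule comm_groupI)
  fix x show "\<exists>y\<in>carrier G. y \<otimes>\<^bsub>G\<^esub> x = \<one>\<^bsub>G\<^esub>" using l_inv by auto
qed (auto simp: assoc l_one r_one intro: comm lcomm)

sublocale G: comm_group G by (rule grp)

lemma inv_eq[simp]: "inv\<^bsub>G\<^esub> x = iv x"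
  by (rule G.inv_equality) (auto simp: l_inv)

lemma mpow_Suc: "mpow mul y (Suc k) = y [^]\<^bsub>G\<^esub> (Suc k)"
  by (induction k) (auto simp: l_one)

lemma mpow_eq: "k \<ge> 1 \<Longrightarrow> mpow mul y k = y [^]\<^bsub>G\<^esub> k"
  using mpow_Suc[of y "k - 1"] by simp

lemma Re_eq: "k \<ge> 1 \<Longrightarrow> Re mul k z \<longleftrightarrow> (\<exists>x. z = x [^]\<^bsub>G\<^esub> k)"
  unfolding Re_def using mpow_eq by simp

lemma cancel_r: "mul x (mul (iv x) y) = y" by (metis assoc l_one r_inv)
lemma T1: "mul (mul a (mul p (iv q))) (mul q (iv p)) = a"
  by (metis assoc lcomm cancel_r r_one)
lemma T2: "mul (mul Y W) (iv t) = mul W (mul Y (iv t))" by (simp only: assoc lcomm)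
lemma T3: "mul (mul (mul Y W) (iv t)) t = mul Y W" by (metis assoc l_inv r_one)
lemma T4: "mul (mul (mul Y W) (iv t)) s = mul (mul Y W) (mul (iv t) s)" by (simp only: assoc)
lemma T5: "mul x s = mul (mul x t) (mul (iv t) s)" by (metis assoc cancel_r)
lemma T6: "mul (mul Y A) W = mul (mul Y W) A" by (simp only: assoc comm lcomm)

abbreviation pw where "pw x k \<equiv> x [^]\<^bsub>G\<^esub> (k::nat)"

lemma pw_pow: "pw (pw x a) b = pw x (a*b)" using G.nat_pow_pow by simp
lemma pw_distrib: "pw (mul x y) k = mul (pw x k) (pw y k)" using G.nat_pow_distrib[of x y k] by simp
lemma pw_inv: "pw (iv x) k = iv (pw x k)" using G.nat_pow_inv[of x k] by simp
lemma solve: "mul A B = C \<Longrightarrow> A = mul C (iv B)"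
  by (metis assoc r_inv r_one)
lemma cancel1: "mul (mul a b) (mul c (iv b)) = mul a c"
  by (metis assoc comm r_inv r_one)

lemma key:
  assumes n1: "n \<ge> 1" and mq: "\<forall>j<(q::nat). m j > 1"
    and C: "\<forall>j<q. m j dvd n \<longrightarrow> \<not> Re mul (m j) (mul (iv t) (s j))"
    and lh: "lt lo hi"
  shows "\<exists>x. lt lo x \<and> lt x hi \<and> Re mul n (mul x t) \<and> (\<forall>j<q. \<not> Re mul (m j) (mul x (s j)))"
proof -
  define a where "a j = mul (iv t) (s j)" for j
  define m' where "m' j = (if j < q then m j else 2)" for j
  have "\<forall>j<Suc q. m' j > 1" using mq by (auto simp: m'_def)
  from M11[OF n1 _ this, of a] obtain y where
    y: "\<And>z j. j<Suc q \<Longrightarrow> \<not> m' j dvd n \<Longrightarrow> mul (mpow mul y n) (a j) \<noteq> mpow mul z (m' j)"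
    by auto
  have y': "mul (pw y n) (a j) \<noteq> pw z (m j)" if "j < q" "\<not> m j dvd n" for z j
    using y[of j z] that mq mpow_eq[OF n1] mpow_eq[of "m j"] by (auto simp: m'_def)
  define M where "M = (\<Prod>j<q. m j)"
  have M1: "M \<ge> 1" using mq unfolding M_def by (auto simp: Suc_le_eq intro!: prod_pos)
  have dvdM: "m j dvd M" if "j < q" for j unfolding M_def using that by (simp add: dvd_prodI)
  define c where "c = mul t (iv (pw y n))"
  have "lt (mul lo c) (mul hi c)" using lh mono by blast
  from M10[OF _ this, of "M*n"] M1 n1 obtain w where
    w: "lt (mul lo c) (pw w (M*n))" "lt (pw w (M*n)) (mul hi c)"
    using mpow_eq[of "M*n"] by (auto simp: Suc_le_eq)
  define x where "x = mul (mul (pw y n) (pw w (M*n))) (iv t)"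
  define d where "d = mul (pw y n) (iv t)"
  have xd: "x = mul (pw w (M*n)) d" unfolding x_def d_def by (rule T2)
  have lod: "mul (mul lo c) d = lo" unfolding c_def d_def by (rule T1)
  have hid: "mul (mul hi c) d = hi" unfolding c_def d_def by (rule T1)
  have x1: "lt lo x" using mono[OF w(1), of d] lod xd by simp
  have x2: "lt x hi" using mono[OF w(2), of d] hid xd by simp
  define b where "b = mul y (pw w M)"
  have bn: "pw b n = mul (pw y n) (pw w (M*n))" unfolding b_def by (simp add: pw_distrib pw_pow)
  have xt: "mul x t = pw b n" unfolding x_def bn by (rule T3)
  have xs: "mul x (s j) = mul (pw b n) (a j)" for j unfolding x_def bn a_def by (rule T4)
  have "\<not> Re mul (m j) (mul x (s j))" if j: "j < q" for j
  proof
    assume R: "Re mul (m j) (mul x (s j))"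
    have mj1: "m j \<ge> 1" using mq j by auto
    obtain z where z: "mul x (s j) = pw z (m j)" using R Re_eq[OF mj1] by auto
    show False
    proof (cases "m j dvd n")
      case True
      then obtain k where k: "n = m j * k" by blast
      have "a j = mul (pw z (m j)) (iv (pw (pw b k) (m j)))"
      proof (rule solve)
        have bk: "pw b n = pw (pw b k) (m j)" using k by (simp add: pw_pow mult.commute)
        show "mul (a j) (pw (pw b k) (m j)) = pw z (m j)" using z xs[of j] bk comm[of "a j"] by simp
      qed
      also have "\<dots> = pw (mul z (iv (pw b k))) (m j)" by (simp add: pw_distrib pw_inv)
      finally have "Re mul (m j) (a j)" using Re_eq[OF mj1] by auto
      then show False using C j True a_def by auto
    next
      case False
      obtain k where k: "M = m j * k" using dvdM[OF j] by blast
      have "mul x (s j) = mul (mul (pw y n) (a j)) (pw (pw w (k*n)) (m j))"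
      proof -
        have wq: "pw w (M*n) = pw (pw w (k*n)) (m j)" using k by (simp add: pw_pow mult_ac)
        show ?thesis unfolding xs bn wq by (rule T6[symmetric])
      qed
      then have "mul (pw y n) (a j) = mul (pw z (m j)) (iv (pw (pw w (k*n)) (m j)))"
        using z by (intro solve) simp
      also have "\<dots> = pw (mul z (iv (pw w (k*n)))) (m j)" by (simp add: pw_distrib pw_inv)
      finally show False using y'[OF j False] by blast
    qed
  qed
  moreover have "Re mul n (mul x t)" using xt Re_eq[OF n1] by auto
  ultimately show ?thesis using x1 x2 by blast
qed

lemma fwd:
  assumes n1: "n \<ge> 1" and mj: "m \<ge> 1" and d: "m dvd n"
    and R1: "Re mul n (mul x t)" and R2: "Re mul m (mul (iv t) s)"
  shows "Re mul m (mul x s)"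
proof -
  obtain y where y: "mul x t = pw y n" using R1 Re_eq[OF n1] by auto
  obtain z where z: "mul (iv t) s = pw z m" using R2 Re_eq[OF mj] by auto
  obtain k where k: "n = m * k" using d by blast
  have "mul x s = mul (mul x t) (mul (iv t) s)" by (rule T5)
  also have "\<dots> = mul (pw (pw y k) m) (pw z m)" using y z k by (simp add: pw_pow mult.commute)
  also have "\<dots> = pw (mul (pw y k) z) m" by (simp add: pw_distrib)
  finally show ?thesis using Re_eq[OF mj] by auto
qed

lemma main:
  fixes n q :: nat and m :: "nat \<Rightarrow> nat" and t u v :: 'a and s :: "nat \<Rightarrow> 'a"
  assumes n1: "n \<ge> 1" and mq: "\<forall>j<(q::nat). m j > 1"
  defines "P \<equiv> (\<forall>j<q. m j dvd n \<longrightarrow> \<not> Re mul (m j) (mul (iv t) (s j)))"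
  shows "((\<exists>x. Re mul n (mul x t) \<and> (\<forall>j<q. \<not> Re mul (m j) (mul x (s j)))) \<longleftrightarrow> P)
       \<and> ((\<exists>x. lt u x \<and> Re mul n (mul x t) \<and> (\<forall>j<q. \<not> Re mul (m j) (mul x (s j)))) \<longleftrightarrow> P)
       \<and> ((\<exists>x. lt x v \<and> Re mul n (mul x t) \<and> (\<forall>j<q. \<not> Re mul (m j) (mul x (s j)))) \<longleftrightarrow> P)
       \<and> ((\<exists>x. lt u x \<and> lt x v \<and> Re mul n (mul x t) \<and> (\<forall>j<q. \<not> Re mul (m j) (mul x (s j))))
            \<longleftrightarrow> P \<and> lt u v)"
proof -
  have F: "P" if "Re mul n (mul x t)" "\<forall>j<q. \<not> Re mul (m j) (mul x (s j))" for x
    unfolding P_def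
  proof (intro allI impI notI)
    fix j assume j: "j < q" "m j dvd n" and R: "Re mul (m j) (mul (iv t) (s j))"
    have "m j \<ge> 1" using mq j by auto
    from fwd[OF n1 this j(2) that(1) R] that(2) j(1) show False by blast
  qed
  have K: "\<exists>x. lt lo x \<and> lt x hi \<and> Re mul n (mul x t) \<and> (\<forall>j<q. \<not> Re mul (m j) (mul x (s j)))"
    if "P" "lt lo hi" for lo hi
    using key[OF n1 mq, of t s lo hi] that unfolding P_def by blast
  obtain g where g: "lt e g"
  proof -
    obtain a where a: "a \<noteq> e" using nontriv by blast
    show ?thesis
    proof (cases "lt e a")
      case True then show ?thesis using that by blast
    next
      case False
      then have "lt a e" using total a by blast
      from mono[OF this, of "iv a"] have "lt e (iv a)" by (simp add: r_inv l_one)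
      then show ?thesis using that by blast
    qed
  qed
  have g1: "lt u (mul u g)" using mono[OF g, of u] by (simp add: l_one comm)
  have g2: "lt (mul v (iv g)) v" using mono[OF g, of "mul v (iv g)"]
    by (simp add: l_one) (metis lcomm r_inv r_one)
  show ?thesis
  proof (intro conjI iffI)
    show "P" if "\<exists>x. Re mul n (mul x t) \<and> (\<forall>j<q. \<not> Re mul (m j) (mul x (s j)))" using that F by blast
    show "P" if "\<exists>x. lt u x \<and> Re mul n (mul x t) \<and> (\<forall>j<q. \<not> Re mul (m j) (mul x (s j)))" using that F by blast
    show "P" if "\<exists>x. lt x v \<and> Re mul n (mul x t) \<and> (\<forall>j<q. \<not> Re mul (m j) (mul x (s j)))" using that F by blast
    show "P" if "\<exists>x. lt u x \<and> lt x v \<and> Re mul n (mul x t) \<and> (\<forall>j<q. \<not> Re mul (m j) (mul x (s j)))" using that F by blast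
    show "lt u v" if "\<exists>x. lt u x \<and> lt x v \<and> Re mul n (mul x t) \<and> (\<forall>j<q. \<not> Re mul (m j) (mul x (s j)))" using that trans by blast
    show "\<exists>x. Re mul n (mul x t) \<and> (\<forall>j<q. \<not> Re mul (m j) (mul x (s j)))" if "P" using K[OF that g] by blast
    show "\<exists>x. lt u x \<and> Re mul n (mul x t) \<and> (\<forall>j<q. \<not> Re mul (m j) (mul x (s j)))" if "P" using K[OF that g1] by blast
    show "\<exists>x. lt x v \<and> Re mul n (mul x t) \<and> (\<forall>j<q. \<not> Re mul (m j) (mul x (s j)))" if "P" using K[OF that g2] by blast
    show "\<exists>x. lt u x \<and> lt x v \<and> Re mul n (mul x t) \<and> (\<forall>j<q. \<not> Re mul (m j) (mul x (s j)))" if "P \<and> lt u v" using K that by blast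
  qed
qed

end

theorem lemma5:
  fixes lt :: "'a \<Rightarrow> 'a \<Rightarrow> bool" and mul :: "'a \<Rightarrow> 'a \<Rightarrow> 'a" and iv :: "'a \<Rightarrow> 'a" and e :: 'a
    and n q :: nat and m :: "nat \<Rightarrow> nat" and t u v :: 'a and s :: "nat \<Rightarrow> 'a"
  assumes "TQ_model lt mul iv e"
    and "n > 1"
    and "\<forall>j<q. m j > 1"
  shows "((\<exists>x. Re mul n (mul x t) \<and> (\<forall>j<q. \<not> Re mul (m j) (mul x (s j))))
            \<longleftrightarrow> (\<forall>j<q. m j dvd n \<longrightarrow> \<not> Re mul (m j) (mul (iv t) (s j))))
       \<and> ((\<exists>x. lt u x \<and> Re mul n (mul x t) \<and> (\<forall>j<q. \<not> Re mul (m j) (mul x (s j))))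
            \<longleftrightarrow> (\<forall>j<q. m j dvd n \<longrightarrow> \<not> Re mul (m j) (mul (iv t) (s j))))
       \<and> ((\<exists>x. lt x v \<and> Re mul n (mul x t) \<and> (\<forall>j<q. \<not> Re mul (m j) (mul x (s j))))
            \<longleftrightarrow> (\<forall>j<q. m j dvd n \<longrightarrow> \<not> Re mul (m j) (mul (iv t) (s j))))
       \<and> ((\<exists>x. lt u x \<and> lt x v \<and> Re mul n (mul x t) \<and> (\<forall>j<q. \<not> Re mul (m j) (mul x (s j))))
            \<longleftrightarrow> (\<forall>j<q. m j dvd n \<longrightarrow> \<not> Re mul (m j) (mul (iv t) (s j))) \<and> lt u v)"
proof -
  interpret tq lt mul iv e by (unfold_locales) (rule assms(1))
  show ?thesis using main[of n q m t s u v] assms(2,3) by simp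
qed

end
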